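(* Suppose $\|\mu_a\|_\infty,\|\widehat\mu_a\|_\infty\le B<\infty$ a.s. for all $a$, and $\mathbb{P}$ satisfies the margin condition with some $\kappa>0$, $\alpha>0$. Let $C^*\in\mathcal{C}_k^*$ and $f_{C}(x)=\|x-\Pi_C(x)\|_2^2$. Then $$\big|\mathbb{P}\{f_{C^*}(\widehat\mu)-f_{C^*}(\mu)\}\big|\lesssim\max_a\|\widehat\mu_a-\mu_a\|_{\mathbb{P},1}+\max_a\|\widehat\mu_a-\mu_a\|_\infty^{\alpha+1}+\frac1\kappa\max_a\big(\|\widehat\mu_a-\mu_a\|_\infty\|\widehat\mu_a-\mu_a\|_{\mathbb{P},1}\big).$$
   Context: $Z=(Y,A,X)\sim\mathbb{P}$, $A\in\mathcal{A}=\{1,\dots,p\}$; $\mu_a(X)=\mathbb{E}(Y\mid X,A=a)$, $\mu=(\mu_1(X),\dots,\mu_p(X))^\top$, $\widehat\mu$ an estimator of $\mu$ held fixed under $\mathbb{P}$ (i.e. $\mathbb{P}\{g(\widehat\mu)\}=\int g(\widehat\mu(x))d\mathbb{P}$). Codebooks $C=\{c_1,\dots,c_k\}\subset\mathbb{R}^p$; $\mathcal{C}_k$ those of size $k$ in the image of $\mu$; $\Pi_C(x)=\arg\min_{c\in C}\|c-x\|_2^2$; $R(C)=\mathbb{E}\|\mu-\Pi_C(\mu)\|_2^2$; $\mathcal{C}_k^*$ its minimizers. $V_j(C^* )=\{x:\|x-c_j^*\|_2\le\|x-c_i^*\|_2\ \forall i\ne j\}$; $N_{C^*}(t)=\bigcup_j\{x\in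 V_j(C^* ):|\,\|x-c_j^*\|_2-\min_{i\ne j}\|x-c_i^*\|_2\,|\le t\}$; margin condition (radius $\kappa$, rate $\alpha$): for $0\le t\le\kappa$, $\sup_{C^*\in\mathcal{C}_k^*}\mathbb{P}(\mu\in N_{C^*}(t))\lesssim t^\alpha$. $\|f\|_{\mathbb{P},1}=\int|f|d\mathbb{P}$, $\|\cdot\|_\infty$ sup norm; $\lesssim$ inequality up to a multiplicative constant. *)

theory Defs
  imports "HOL-Probability.Probability"
begin

(* Treatment index set A = {1..p} is modelled by a finite type 'p (p = CARD('p)); vectors in
   R^p are  real ^ 'p . *)

definition proj :: "(real ^ 'p) set \<Rightarrow> real ^ 'p \<Rightarrow> real ^ 'p" where
  "proj C x = (SOME c. c \<in> C \<and> (\<forall>c'\<in>C. (norm (c - x))\<^sup>2 \<le> (norm (c' - x))\<^sup>2))"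

definition fC :: "(real ^ 'p) set \<Rightarrow> real ^ 'p \<Rightarrow> real" where
  "fC C x = (norm (x - proj C x))\<^sup>2"

definition risk :: "'z measure \<Rightarrow> ('z \<Rightarrow> 'x) \<Rightarrow> ('x \<Rightarrow> real ^ 'p) \<Rightarrow> (real ^ 'p) set \<Rightarrow> real" where
  "risk M X mu C = (\<integral>z. (norm (mu (X z) - proj C (mu (X z))))\<^sup>2 \<partial>M)"

definition codebooks :: "'z measure \<Rightarrow> ('z \<Rightarrow> 'x) \<Rightarrow> ('x \<Rightarrow> real ^ 'p) \<Rightarrow> nat \<Rightarrow> (real ^ 'p) set set" where
  "codebooks M X mu k = {C. finite C \<and> card C = k \<and> C \<subseteq> mu ` X ` space M}"

definition opt_codebooks :: "'z measure \<Rightarrow> ('z \<Rightarrow> 'x) \<Rightarrow> ('x \<Rightarrow> real ^ 'p) \<Rightarrow> nat \<Rightarrow> (real ^ 'p) set set" where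
  "opt_codebooks M X mu k = {C \<in> codebooks M X mu k. \<forall>C' \<in> codebooks M X mu k. risk M X mu C \<le> risk M X mu C'}"

definition voronoi :: "(real ^ 'p) set \<Rightarrow> real ^ 'p \<Rightarrow> (real ^ 'p) set" where
  "voronoi C c = {x. \<forall>c'\<in>C. c' \<noteq> c \<longrightarrow> dist x c \<le> dist x c'}"

definition margin_region :: "(real ^ 'p) set \<Rightarrow> real \<Rightarrow> (real ^ 'p) set" where
  "margin_region C t = (\<Union>c\<in>C. {x \<in> voronoi C c. \<bar>dist x c - Min ((\<lambda>c'. dist x c') ` (C - {c}))\<bar> \<le> t})"

definition margin_condition ::
  "'z measure \<Rightarrow> ('z \<Rightarrow> 'x) \<Rightarrow> ('x \<Rightarrow> real ^ 'p) \<Rightarrow> nat \<Rightarrow> real \<Rightarrow> real \<Rightarrow> real \<Rightarrow> bool" where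
  "margin_condition M X mu k \<kappa> \<alpha> cm \<longleftrightarrow>
     (\<forall>t. 0 \<le> t \<and> t \<le> \<kappa> \<longrightarrow>
        (\<forall>C \<in> opt_codebooks M X mu k. measure M {z \<in> space M. mu (X z) \<in> margin_region C t} \<le> cm * t powr \<alpha>))"

definition L1norm :: "'z measure \<Rightarrow> ('z \<Rightarrow> 'x) \<Rightarrow> ('x \<Rightarrow> real) \<Rightarrow> real" where
  "L1norm M X g = (\<integral>z. \<bar>g (X z)\<bar> \<partial>M)"

definition supnorm :: "'z measure \<Rightarrow> ('z \<Rightarrow> 'x) \<Rightarrow> ('x \<Rightarrow> real) \<Rightarrow> real" where
  "supnorm M X g = real_of_ereal (esssup M (\<lambda>z. ereal \<bar>g (X z)\<bar>))"

end

theory Submission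
  imports Defs
begin

lemma proj_props:
  fixes C :: "(real ^ 'p) set"
  assumes "finite C" "C \<noteq> {}"
  shows "proj C x \<in> C \<and> (\<forall>c'\<in>C. (norm (proj C x - x))\<^sup>2 \<le> (norm (c' - x))\<^sup>2)"
proof -
  let ?f = "\<lambda>c. (norm (c - x))\<^sup>2"
  have "Min (?f ` C) \<in> ?f ` C" using assms by (intro Min_in) auto
  then obtain c where c: "c \<in> C" "?f c = Min (?f ` C)" by auto
  have "\<forall>c'\<in>C. ?f c \<le> ?f c'" using c assms by auto
  with c(1) have "\<exists>c. c \<in> C \<and> (\<forall>c'\<in>C. ?f c \<le> ?f c')" by blast
  then show ?thesis unfolding proj_def by (rule someI_ex)
qed

lemma fC_le:
  fixes C :: "(real ^ 'p) set"
  assumes "finite C" "C \<noteq> {}" "c \<in> C"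
  shows "fC C x \<le> (norm (x - c))\<^sup>2"
  using proj_props[OF assms(1,2), of x] assms(3) unfolding fC_def
  by (metis norm_minus_commute)

lemma fC_ex:
  fixes C :: "(real ^ 'p) set"
  assumes "finite C" "C \<noteq> {}"
  shows "\<exists>c\<in>C. fC C x = (norm (x - c))\<^sup>2 \<and> (\<forall>c'\<in>C. norm (x - c) \<le> norm (x - c'))"
proof -
  have p: "proj C x \<in> C" "\<forall>c'\<in>C. (norm (proj C x - x))\<^sup>2 \<le> (norm (c' - x))\<^sup>2"
    using proj_props[OF assms] by auto
  have "\<forall>c'\<in>C. norm (x - proj C x) \<le> norm (x - c')"
  proof
    fix c' assume "c' \<in> C"
    then have "(norm (x - proj C x))\<^sup>2 \<le> (norm (x - c'))\<^sup>2" using p(2) by (metis norm_minus_commute)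
    then show "norm (x - proj C x) \<le> norm (x - c')" by (simp add: power_mono_iff)
  qed
  then show ?thesis using p(1) unfolding fC_def by blast
qed

lemma fC_Min:
  fixes C :: "(real ^ 'p) set"
  assumes "finite C" "C \<noteq> {}"
  shows "fC C x = Min ((\<lambda>c. (norm (x - c))\<^sup>2) ` C)"
proof -
  obtain c where c: "c \<in> C" "fC C x = (norm (x - c))\<^sup>2" using fC_ex[OF assms] by blast
  have "Min ((\<lambda>c. (norm (x - c))\<^sup>2) ` C) = fC C x"
  proof (rule Min_eqI)
    show "finite ((\<lambda>c. (norm (x - c))\<^sup>2) ` C)" using assms by auto
  next
    fix y assume "y \<in> (\<lambda>c. (norm (x - c))\<^sup>2) ` C"
    then obtain c' where "c' \<in> C" "y = (norm (x - c'))\<^sup>2" by auto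
    then show "fC C x \<le> y" using fC_le[OF assms] by auto
  next
    show "fC C x \<in> (\<lambda>c. (norm (x - c))\<^sup>2) ` C" using c by auto
  qed
  then show ?thesis by simp
qed

lemma fC_meas:
  fixes C :: "(real ^ 'p) set"
  assumes "finite C" "C \<noteq> {}"
  shows "fC C \<in> borel_measurable borel"
proof -
  have "fC C = (\<lambda>x. Min ((\<lambda>c. (norm (x - c))\<^sup>2) ` C))" using fC_Min[OF assms] by auto
  also have "\<dots> \<in> borel_measurable borel"
    by (rule borel_measurable_Min) (use assms in auto)
  finally show ?thesis .
qed

lemma fC_lip1:
  fixes C :: "(real ^ 'p) set"
  assumes "finite C" "C \<noteq> {}" "c0 \<in> C" "norm u \<le> R" "norm v \<le> R" "norm c0 \<le> R0"
  shows "fC C u - fC C v \<le> norm (u - v) * (4 * R + 2 * R0)"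
proof -
  obtain c where c: "c \<in> C" "fC C v = (norm (v - c))\<^sup>2" "\<forall>c'\<in>C. norm (v - c) \<le> norm (v - c')"
    using fC_ex[OF assms(1,2)] by blast
  define a where "a = norm (u - c)"
  define b where "b = norm (v - c)"
  have "b \<le> norm (v - c0)" using c(3) assms(3) unfolding b_def by blast
  also have "\<dots> \<le> norm v + norm c0" by (rule norm_triangle_ineq4)
  finally have b1: "b \<le> R + R0" using assms(5,6) by linarith
  have "u - c = (u - v) + (v - c)" by simp
  then have a1: "a \<le> norm (u - v) + b" unfolding a_def b_def by (metis norm_triangle_ineq)
  have a2: "a - b \<le> norm (u - v)" using a1 by simp
  have "norm (u - v) \<le> norm u + norm v" by (rule norm_triangle_ineq4)
  then have uv: "norm (u - v) \<le> 2 * R" using assms(4,5) by linarith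
  have ab0: "a \<ge> 0" "b \<ge> 0" unfolding a_def b_def by auto
  have "fC C u \<le> a\<^sup>2" using fC_le[OF assms(1,2) c(1)] unfolding a_def .
  then have "fC C u - fC C v \<le> (a - b) * (a + b)" using c(2) unfolding b_def
    by (simp add: power2_eq_square algebra_simps)
  also have "\<dots> \<le> norm (u - v) * (a + b)"
    using a2 ab0 by (intro mult_right_mono) auto
  also have "\<dots> \<le> norm (u - v) * (4 * R + 2 * R0)"
    using a1 b1 uv ab0 by (intro mult_left_mono) auto
  finally show ?thesis .
qed

lemma fC_lip:
  fixes C :: "(real ^ 'p) set"
  assumes "finite C" "C \<noteq> {}" "c0 \<in> C" "norm u \<le> R" "norm v \<le> R" "norm c0 \<le> R0"
  shows "\<bar>fC C u - fC C v\<bar> \<le> norm (u - v) * (4 * R + 2 * R0)"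
proof -
  have 1: "fC C u - fC C v \<le> norm (u - v) * (4 * R + 2 * R0)" by (rule fC_lip1[OF assms])
  have 2: "fC C v - fC C u \<le> norm (v - u) * (4 * R + 2 * R0)" by (rule fC_lip1[OF assms(1,2,3,5,4,6)])
  have "norm (v - u) = norm (u - v)" by (rule norm_minus_commute)
  with 2 have 3: "fC C v - fC C u \<le> norm (u - v) * (4 * R + 2 * R0)" by simp
  from 1 3 show ?thesis unfolding abs_le_iff by linarith
qed

lemma integrable_bdd:
  fixes g :: "'z \<Rightarrow> real"
  assumes "prob_space M" "g \<in> borel_measurable M" "AE z in M. \<bar>g z\<bar> \<le> c"
  shows "integrable M g"
proof -
  interpret prob_space M by fact
  have "integrable M (\<lambda>_. c)" by simp
  moreover have "AE z in M. norm (g z) \<le> norm ((\<lambda>_. c) z)"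
    using assms(3) by eventually_elim auto
  ultimately show ?thesis using Bochner_Integration.integrable_bound assms(2) by blast
qed


lemma good_point:
  assumes "prob_space M" "AE z in M. P z"
  shows "\<exists>z\<in>space M. P z"
proof (rule ccontr)
  interpret prob_space M by fact
  assume "\<not> ?thesis"
  then have "AE z in M. False" using assms(2) by (auto elim: AE_mp intro!: AE_I2)
  then show False by simp
qed

lemma sup_nonneg:
  assumes "prob_space M"
  shows "supnorm M X g \<ge> 0"
proof -
  interpret prob_space M by fact
  have "esssup M (\<lambda>_. 0::ereal) = 0" by (rule esssup_const) (simp add: emeasure_space_1)
  moreover have "esssup M (\<lambda>_. 0::ereal) \<le> esssup M (\<lambda>z. ereal \<bar>g (X z)\<bar>)"
    by (rule esssup_mono) auto
  ultimately show ?thesis unfolding supnorm_def by (intro real_of_ereal_pos) auto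
qed

lemma L1_nonneg: "L1norm M X g \<ge> 0"
  unfolding L1norm_def by (rule integral_nonneg_AE) auto

lemma Max_nonneg: "(\<And>a. f a \<ge> (0::real)) \<Longrightarrow> (MAX a::'p::finite. f a) \<ge> 0"
  by (meson Max_ge finite UNIV_I finite_imageI imageI order.trans)

lemma box_norm:
  fixes x :: "real ^ 'p"
  assumes "\<forall>a. \<bar>x $ a\<bar> \<le> B"
  shows "norm x \<le> real CARD('p) * max B 0"
proof -
  have "norm x \<le> (\<Sum>i\<in>UNIV. \<bar>x $ i\<bar>)" by (rule norm_le_l1_cart)
  also have "\<dots> \<le> (\<Sum>i\<in>(UNIV::'p set). max B 0)" using assms by (intro sum_mono) (simp add: le_max_iff_disj)
  also have "\<dots> = real CARD('p) * max B 0" by simp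
  finally show ?thesis .
qed

theorem lemmaA3:
  fixes B \<alpha> cm :: real and k :: nat
  assumes "k \<ge> 1" "\<alpha> > 0"
  shows "\<exists>K::real. \<forall>(M :: 'z measure) (N :: 'x measure) (Y :: 'z \<Rightarrow> real) (A :: 'z \<Rightarrow> 'p::finite)
            (X :: 'z \<Rightarrow> 'x) (mu :: 'x \<Rightarrow> real ^ 'p) (muhat :: 'x \<Rightarrow> real ^ 'p) \<kappa> Cstar.
    prob_space M \<and>
    X \<in> measurable M N \<and> A \<in> measurable M (count_space UNIV) \<and>
    Y \<in> borel_measurable M \<and> integrable M Y \<and>
    mu \<in> borel_measurable N \<and> muhat \<in> borel_measurable N \<and>
    (\<forall>a. AE z in M. A z = a \<longrightarrow>
        mu (X z) $ a = real_cond_exp M (vimage_algebra (space M) (\<lambda>z. (X z, A z))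
                                        (N \<Otimes>\<^sub>M count_space UNIV)) Y z) \<and>
    (AE z in M. \<forall>a. \<bar>mu (X z) $ a\<bar> \<le> B \<and> \<bar>muhat (X z) $ a\<bar> \<le> B) \<and>
    \<kappa> > 0 \<and> margin_condition M X mu k \<kappa> \<alpha> cm \<and>
    Cstar \<in> opt_codebooks M X mu k
    \<longrightarrow>
    \<bar>\<integral>z. fC Cstar (muhat (X z)) - fC Cstar (mu (X z)) \<partial>M\<bar>
      \<le> K * ((MAX a. L1norm M X (\<lambda>x. muhat x $ a - mu x $ a))
             + (MAX a. supnorm M X (\<lambda>x. muhat x $ a - mu x $ a)) powr (\<alpha> + 1)
             + (1 / \<kappa>) * (MAX a. supnorm M X (\<lambda>x. muhat x $ a - mu x $ a)
                                  * L1norm M X (\<lambda>x. muhat x $ a - mu x $ a)))"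
proof -
  define P where "P = real CARD('p)"
  define R where "R = P * max B 0"
  define R0 where "R0 = 3 * R + 1"
  define D where "D = 4 * R + 2 * R0"
  define K where "K = D * P"
  have P0: "P \<ge> 0" unfolding P_def by simp
  have R0': "R \<ge> 0" unfolding R_def using P0 by simp
  have D0: "D \<ge> 0" unfolding D_def R0_def using R0' by simp
  have K0: "K \<ge> 0" unfolding K_def using D0 P0 by simp
  show ?thesis
  proof (rule exI[of _ K], intro allI impI, elim conjE)
    fix M :: "'z measure" and N :: "'x measure" and Y :: "'z \<Rightarrow> real" and A :: "'z \<Rightarrow> 'p"
      and X :: "'z \<Rightarrow> 'x" and mu muhat :: "'x \<Rightarrow> real ^ 'p" and \<kappa> :: real and Cs
    assume ps: "prob_space M" and Xm: "X \<in> measurable M N"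
      and muM: "mu \<in> borel_measurable N" and mhM: "muhat \<in> borel_measurable N"
      and bd: "AE z in M. \<forall>a. \<bar>mu (X z) $ a\<bar> \<le> B \<and> \<bar>muhat (X z) $ a\<bar> \<le> B"
      and kp: "\<kappa> > 0" and Cs: "Cs \<in> opt_codebooks M X mu k"
    interpret prob_space M by fact
    have fin: "finite Cs" and crd: "card Cs = k" and sub: "Cs \<subseteq> mu ` X ` space M"
      and opt: "\<And>C'. C' \<in> codebooks M X mu k \<Longrightarrow> risk M X mu Cs \<le> risk M X mu C'"
      using Cs unfolding opt_codebooks_def codebooks_def by auto
    have Cne: "Cs \<noteq> {}" using crd assms(1) by auto
    have bd': "AE z in M. norm (mu (X z)) \<le> R \<and> norm (muhat (X z)) \<le> R"
      using bd proof eventually_elim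
      case (elim z)
      then show ?case unfolding R_def P_def using box_norm[of "mu (X z)" B] box_norm[of "muhat (X z)" B]
        by auto
    qed
    have bdc: "AE z in M. \<forall>a. \<bar>muhat (X z) $ a - mu (X z) $ a\<bar> \<le> 2 * max B 0"
      using bd proof eventually_elim
      case (elim z)
      show ?case
      proof
        fix a
        have "\<bar>muhat (X z) $ a - mu (X z) $ a\<bar> \<le> \<bar>muhat (X z) $ a\<bar> + \<bar>mu (X z) $ a\<bar>" by simp
        then show "\<bar>muhat (X z) $ a - mu (X z) $ a\<bar> \<le> 2 * max B 0" using elim[rule_format, of a] by linarith
      qed
    qed
    have mX: "(\<lambda>z. mu (X z)) \<in> borel_measurable M" using measurable_compose[OF Xm muM] by simp
    have mhX: "(\<lambda>z. muhat (X z)) \<in> borel_measurable M" using measurable_compose[OF Xm mhM] by simp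
    have fm: "(\<lambda>z. fC C (mu (X z))) \<in> borel_measurable M" if "finite C" "C \<noteq> {}" for C
      using measurable_compose[OF mX fC_meas[OF that]] by simp
    have fhm: "(\<lambda>z. fC C (muhat (X z))) \<in> borel_measurable M" if "finite C" "C \<noteq> {}" for C
      using measurable_compose[OF mhX fC_meas[OF that]] by simp
    have rk: "risk M X mu C = (\<integral>z. fC C (mu (X z)) \<partial>M)" for C
      unfolding risk_def fC_def by simp
    have fC0: "fC C x \<ge> 0" for C x unfolding fC_def by simp
    have "\<exists>c0\<in>Cs. norm c0 \<le> R0"
    proof (rule ccontr)
      assume "\<not> ?thesis"
      then have far: "\<forall>c\<in>Cs. norm c > R0" by auto
      obtain z0 where z0: "z0 \<in> space M" "norm (mu (X z0)) \<le> R"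
        using good_point[OF ps bd'] by auto
      define p where "p = mu (X z0)"
      have pn: "p \<notin> Cs" using far z0 R0' unfolding p_def R0_def by force
      obtain c1 where c1: "c1 \<in> Cs" using Cne by auto
      define C' where "C' = insert p (Cs - {c1})"
      have finC': "finite C'" "C' \<noteq> {}" unfolding C'_def using fin by auto
      have "card C' = k" unfolding C'_def using fin pn c1 crd assms(1)
        by (simp add: card_insert_if)
      moreover have "C' \<subseteq> mu ` X ` space M" unfolding C'_def p_def using sub z0 by auto
      ultimately have "C' \<in> codebooks M X mu k" unfolding codebooks_def using finC' by auto
      then have le: "risk M X mu Cs \<le> risk M X mu C'" by (rule opt)
      have pC': "p \<in> C'" unfolding C'_def by simp
      have upAE: "AE z in M. fC C' (mu (X z)) \<le> (2 * R)\<^sup>2"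
        using bd' proof eventually_elim
        case (elim z)
        have "fC C' (mu (X z)) \<le> (norm (mu (X z) - p))\<^sup>2" by (rule fC_le[OF finC' pC'])
        also have "\<dots> \<le> (2 * R)\<^sup>2"
        proof (rule power_mono)
          have "norm (mu (X z) - p) \<le> norm (mu (X z)) + norm p" by (rule norm_triangle_ineq4)
          then show "norm (mu (X z) - p) \<le> 2 * R" using elim z0 unfolding p_def by linarith
        qed simp
        finally show ?case .
      qed
      have intC': "integrable M (\<lambda>z. fC C' (mu (X z)))"
        by (rule integrable_bdd[OF ps fm[OF finC'], of "(2 * R)\<^sup>2"])
          (use upAE in \<open>eventually_elim, simp add: abs_of_nonneg[OF fC0]\<close>)
      have "risk M X mu C' \<le> (\<integral>z. (2 * R)\<^sup>2 \<partial>M)"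
        unfolding rk by (rule integral_mono_AE[OF intC' _ upAE]) simp
      then have up: "risk M X mu C' \<le> (2 * R)\<^sup>2" by (simp add: prob_space)
      have loAE: "AE z in M. (2 * R + 1)\<^sup>2 \<le> fC Cs (mu (X z))"
        using bd' proof eventually_elim
        case (elim z)
        obtain c where c: "c \<in> Cs" "fC Cs (mu (X z)) = (norm (mu (X z) - c))\<^sup>2"
          using fC_ex[OF fin Cne] by blast
        have "norm c \<le> norm (mu (X z)) + norm (mu (X z) - c)"
          using norm_triangle_ineq4[of "mu (X z)" "mu (X z) - c"] by simp
        moreover have "norm c > R0" using far c(1) by blast
        ultimately have "2 * R + 1 \<le> norm (mu (X z) - c)" using elim unfolding R0_def by linarith
        then show ?case using c(2) R0' by (simp add: power_mono)
      qed
      have intCs: "integrable M (\<lambda>z. fC Cs (mu (X z)))"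
      proof (rule integrable_bdd[OF ps fm[OF fin Cne]])
        show "AE z in M. \<bar>fC Cs (mu (X z))\<bar> \<le> (R + norm c1)\<^sup>2"
          using bd' proof eventually_elim
          case (elim z)
          have "fC Cs (mu (X z)) \<le> (norm (mu (X z) - c1))\<^sup>2" by (rule fC_le[OF fin Cne c1])
          also have "\<dots> \<le> (R + norm c1)\<^sup>2"
          proof (rule power_mono)
            have "norm (mu (X z) - c1) \<le> norm (mu (X z)) + norm c1" by (rule norm_triangle_ineq4)
            then show "norm (mu (X z) - c1) \<le> R + norm c1" using elim by linarith
          qed simp
          finally show ?case by (simp add: abs_of_nonneg[OF fC0])
        qed
      qed
      have "(\<integral>z. (2 * R + 1)\<^sup>2 \<partial>M) \<le> risk M X mu Cs"
        unfolding rk by (rule integral_mono_AE[OF _ intCs loAE]) simp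
      then have lo: "(2 * R + 1)\<^sup>2 \<le> risk M X mu Cs" by (simp add: prob_space)
      from lo le up have "(2 * R + 1)\<^sup>2 \<le> (2 * R)\<^sup>2" by linarith
      then show False using R0' by (simp add: power2_eq_square algebra_simps)
    qed
    then obtain c0 where c0: "c0 \<in> Cs" "norm c0 \<le> R0" by blast
    define h where "h z = fC Cs (muhat (X z)) - fC Cs (mu (X z))" for z
    define e where "e a z = \<bar>muhat (X z) $ a - mu (X z) $ a\<bar>" for a z
    define g where "g z = D * (\<Sum>a\<in>UNIV. e a z)" for z
    have vn: "(\<lambda>x::real ^ 'p. x $ a) \<in> borel_measurable borel" for a
      by (intro borel_measurable_continuous_onI linear_continuous_on bounded_linear_vec_nth)
    have em: "e a \<in> borel_measurable M" for a
    proof -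
      have "(\<lambda>z. muhat (X z) $ a) \<in> borel_measurable M" using measurable_compose[OF mhX vn] by simp
      moreover have "(\<lambda>z. mu (X z) $ a) \<in> borel_measurable M" using measurable_compose[OF mX vn] by simp
      ultimately show ?thesis unfolding e_def by measurable
    qed
    have ei: "integrable M (e a)" for a
    proof (rule integrable_bdd[OF ps em])
      show "AE z in M. \<bar>e a z\<bar> \<le> 2 * max B 0" using bdc unfolding e_def by eventually_elim auto
    qed
    have gi: "integrable M g" unfolding g_def using ei by auto
    have hm: "h \<in> borel_measurable M" unfolding h_def using fm[OF fin Cne] fhm[OF fin Cne] by measurable
    have hg: "AE z in M. \<bar>h z\<bar> \<le> g z"
      using bd' proof eventually_elim
      case (elim z)
      have "\<bar>h z\<bar> \<le> norm (muhat (X z) - mu (X z)) * (4 * R + 2 * R0)"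
        unfolding h_def using elim by (intro fC_lip[OF fin Cne c0(1) _ _ c0(2)]) auto
      also have "\<dots> \<le> (\<Sum>a\<in>UNIV. e a z) * D" unfolding D_def
      proof (rule mult_right_mono)
        show "norm (muhat (X z) - mu (X z)) \<le> (\<Sum>a\<in>UNIV. e a z)"
          unfolding e_def using norm_le_l1_cart[of "muhat (X z) - mu (X z)"] by simp
      qed (use D0 D_def in simp)
      finally show ?case unfolding g_def by (simp add: mult.commute)
    qed
    have hi: "integrable M h"
      by (rule Bochner_Integration.integrable_bound[OF gi hm]) (use hg in \<open>auto elim: AE_mp\<close>)
    let ?L = "\<lambda>a. L1norm M X (\<lambda>x. muhat x $ a - mu x $ a)"
    let ?S = "\<lambda>a. supnorm M X (\<lambda>x. muhat x $ a - mu x $ a)"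
    have Le: "?L a = integral\<^sup>L M (e a)" for a unfolding L1norm_def e_def by simp
    have "\<bar>\<integral>z. h z \<partial>M\<bar> \<le> (\<integral>z. \<bar>h z\<bar> \<partial>M)"
      using integral_norm_bound[of M h] by simp
    also have "\<dots> \<le> integral\<^sup>L M g"
      by (rule integral_mono_AE[OF _ gi hg]) (use hi in simp)
    also have "\<dots> = D * (\<Sum>a\<in>UNIV. ?L a)"
      unfolding g_def Le using ei by (simp add: integral_sum)
    also have "\<dots> \<le> D * (\<Sum>a\<in>(UNIV::'p set). (MAX a. ?L a))"
      by (intro mult_left_mono sum_mono D0) simp
    also have "\<dots> = K * (MAX a. ?L a)" unfolding K_def P_def by simp
    also have "\<dots> \<le> K * ((MAX a. ?L a) + (MAX a. ?S a) powr (\<alpha> + 1) + (1 / \<kappa>) * (MAX a. ?S a * ?L a))"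
    proof (rule mult_left_mono[OF _ K0])
      have "(MAX a. ?S a * ?L a) \<ge> 0"
        by (rule Max_nonneg) (intro mult_nonneg_nonneg sup_nonneg[OF ps] L1_nonneg)
      then have "(1 / \<kappa>) * (MAX a. ?S a * ?L a) \<ge> 0" using kp by simp
      then show "(MAX a. ?L a) \<le> (MAX a. ?L a) + (MAX a. ?S a) powr (\<alpha> + 1) + (1 / \<kappa>) * (MAX a. ?S a * ?L a)"
        using powr_ge_zero[of "MAX a. ?S a" "\<alpha> + 1"] by linarith
    qed
    finally show "\<bar>\<integral>z. fC Cs (muhat (X z)) - fC Cs (mu (X z)) \<partial>M\<bar>
      \<le> K * ((MAX a. ?L a) + (MAX a. ?S a) powr (\<alpha> + 1) + (1 / \<kappa>) * (MAX a. ?S a * ?L a))"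
      unfolding h_def .
  qed
qed


end
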